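(* Let $W\in\mathbb{D}_n$ be a Dale matrix with excitatory neurons $\mathcal{E}$ and inhibitory neurons $\mathcal{I}$, satisfying the Ground Assumption, and let $W'\in\mathbb{D}_n$ (same partition) be defined by $W'_{ij}=0$ for all $i\in\mathcal{I}$, $j\in\mathcal{E}$, and $W'_{ij}=W_{ij}$ otherwise. Then $\mathcal{C}(W)=\mathcal{C}(W')$.
   Context: Threshold-linear network: for $W\in\mathbb{R}^{n\times n}$ and $b\in\mathbb{R}^n$, the dynamics are $\dot x_i=-x_i+[\sum_{j=1}^n W_{ij}x_j+b_i]_+$, where $[y]_+=\max(0,y)$. A fixed point is $x^*\in\mathbb{R}^n$ with $x^*=[Wx^*+b]_+$. A Dale matrix $W\in\mathbb{D}_n$ is an $n\times n$ real matrix with a partition $[n]=\mathcal{E}\sqcup\mathcal{I}$ (excitatory/inhibitory) such that $W_{ii}=0$, $W_{ji}\ge0$ for all $j$ when $i\in\mathcal{E}$, and $W_{ji}\le0$ for all $j$ when $i\in\mathcal{I}$. Ground Assumption: for every nonempty $\sigma\subset[n]$, the principal submatrix $(I-W)_\sigma$ is nonsingular. Excitatory support: $\mathrm{supp}_+x=\{i\in\mathcal{E}:x_i>0\}$. Combinatorial code: $\mathcal{C}(W)=\{\mathrm{supp}_+x^*: b\in\mathbb{R}^n_{\ge0},\ x^*\in\mathbb{R}^n_{\ge0}\text{ a fixed point of }(W,b)\}$. *)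

theory Defs
  imports "Jordan_Normal_Form.Determinant" "Jordan_Normal_Form.DL_Submatrix"
begin

text \<open>Neurons are indexed by 0..n-1; E is the set of excitatory neurons,
  inhibitory neurons are the complement of E in 0..n-1.\<close>

definition dale_matrix :: "nat \<Rightarrow> nat set \<Rightarrow> real mat \<Rightarrow> bool" where
  "dale_matrix n E W \<longleftrightarrow> W \<in> carrier_mat n n \<and> E \<subseteq> {..<n} \<and>
     (\<forall>i<n. W $$ (i, i) = 0) \<and>
     (\<forall>i<n. i \<in> E \<longrightarrow> (\<forall>j<n. W $$ (j, i) \<ge> 0)) \<and>
     (\<forall>i<n. i \<notin> E \<longrightarrow> (\<forall>j<n. W $$ (j, i) \<le> 0))"

definition ground_assumption :: "nat \<Rightarrow> real mat \<Rightarrow> bool" where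
  "ground_assumption n W \<longleftrightarrow>
     (\<forall>\<sigma>. \<sigma> \<noteq> {} \<and> \<sigma> \<subseteq> {..<n} \<longrightarrow> det (submatrix (1\<^sub>m n - W) \<sigma> \<sigma>) \<noteq> 0)"

definition relu_vec :: "real vec \<Rightarrow> real vec" where
  "relu_vec v = map_vec (\<lambda>y. max 0 y) v"

definition is_fixed_point :: "real mat \<Rightarrow> real vec \<Rightarrow> real vec \<Rightarrow> bool" where
  "is_fixed_point W b x \<longleftrightarrow> x = relu_vec (W *\<^sub>v x + b)"

definition supp_plus :: "nat set \<Rightarrow> real vec \<Rightarrow> nat set" where
  "supp_plus E x = {i \<in> E. i < dim_vec x \<and> x $ i > 0}"

definition comb_code :: "nat \<Rightarrow> nat set \<Rightarrow> real mat \<Rightarrow> nat set set" where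
  "comb_code n E W = {supp_plus E x | b x.
      b \<in> carrier_vec n \<and> x \<in> carrier_vec n \<and>
      (\<forall>i<n. b $ i \<ge> 0) \<and> (\<forall>i<n. x $ i \<ge> 0) \<and> is_fixed_point W b x}"

text \<open>W' : delete all excitatory-to-inhibitory connections (rows in I, columns in E).\<close>
definition drop_EI :: "nat \<Rightarrow> nat set \<Rightarrow> real mat \<Rightarrow> real mat" where
  "drop_EI n E W = mat n n (\<lambda>(i, j). if i \<notin> E \<and> j \<in> E then 0 else W $$ (i, j))"

end

theory Submission
  imports Defs
begin

lemma fp_iff:
  assumes W: "W \<in> carrier_mat n n" and x: "x \<in> carrier_vec n" and b: "b \<in> carrier_vec n"
  shows "is_fixed_point W b x \<longleftrightarrow>
    (\<forall>i<n. x$i = max 0 ((\<Sum>j\<in>{0..<n}. W$$(i,j) * x$j) + b$i))"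
proof -
  have e: "(W *\<^sub>v x + b) $ i = (\<Sum>j\<in>{0..<n}. W$$(i,j) * x$j) + b$i" if "i<n" for i
    using W x b that by (simp add: scalar_prod_def mult.commute)
  show ?thesis
    unfolding is_fixed_point_def relu_vec_def
  proof
    assume h: "x = map_vec (max 0) (W *\<^sub>v x + b)"
    show "\<forall>i<n. x$i = max 0 ((\<Sum>j\<in>{0..<n}. W$$(i,j) * x$j) + b$i)"
    proof (intro allI impI)
      fix i assume i: "i<n"
      have "x $ i = map_vec (max 0) (W *\<^sub>v x + b) $ i" using h by simp
      also have "\<dots> = max 0 ((W *\<^sub>v x + b) $ i)" using i W b by simp
      finally show "x$i = max 0 ((\<Sum>j\<in>{0..<n}. W$$(i,j) * x$j) + b$i)" using e[OF i] by simp
    qed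
  next
    assume h: "\<forall>i<n. x$i = max 0 ((\<Sum>j\<in>{0..<n}. W$$(i,j) * x$j) + b$i)"
    show "x = map_vec (max 0) (W *\<^sub>v x + b)"
    proof (rule eq_vecI)
      fix i assume "i < dim_vec (map_vec (max 0) (W *\<^sub>v x + b))"
      then have i: "i<n" using W b by simp
      have "x $ i = max 0 ((W *\<^sub>v x + b) $ i)" using h[rule_format, OF i] e[OF i] by simp
      then show "x $ i = map_vec (max 0) (W *\<^sub>v x + b) $ i" using i W b by simp
    next
      show "dim_vec x = dim_vec (map_vec (max 0) (W *\<^sub>v x + b))" using x W b by simp
    qed
  qed
qed

theorem mainTheorem2:
  fixes n :: nat and E :: "nat set" and W :: "real mat"
  assumes "dale_matrix n E W"
    and "ground_assumption n W"
  shows "comb_code n E W = comb_code n E (drop_EI n E W)"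
proof -
  note D = assms(1)[unfolded dale_matrix_def]
  have WC: "W \<in> carrier_mat n n" using D by blast
  define W' where "W' = drop_EI n E W"
  have W'C: "W' \<in> carrier_mat n n" unfolding W'_def drop_EI_def by simp
  have W'e: "W' $$ (i,j) = (if i \<notin> E \<and> j \<in> E then 0 else W $$ (i,j))" if "i<n" "j<n" for i j
    using that unfolding W'_def drop_EI_def by simp
  have pos: "W$$(i,j) \<ge> 0" if "i<n" "j<n" "j\<in>E" for i j using D that by blast
  have neg: "W$$(i,j) \<le> 0" if "i<n" "j<n" "j\<notin>E" for i j using D that by blast
  show ?thesis unfolding W'_def[symmetric]
  proof
    show "comb_code n E W \<subseteq> comb_code n E W'"
    proof
      fix S assume "S \<in> comb_code n E W"
      then obtain b x where S: "S = supp_plus E x" and b: "b \<in> carrier_vec n" and x: "x \<in> carrier_vec n"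
        and bn: "\<forall>i<n. b $ i \<ge> 0" and xn: "\<forall>i<n. x $ i \<ge> 0" and fp: "is_fixed_point W b x"
        unfolding comb_code_def by blast
      define s where "s i = (\<Sum>j\<in>{0..<n}. if j\<in>E then W$$(i,j)*x$j else 0)" for i
      define b' where "b' = vec n (\<lambda>i. if i\<in>E then b$i else b$i + s i)"
      have sn: "s i \<ge> 0" if "i<n" for i
        unfolding s_def using pos[OF that] xn by (intro sum_nonneg) auto
      have sumW': "(\<Sum>j\<in>{0..<n}. W'$$(i,j) * x$j) =
          (\<Sum>j\<in>{0..<n}. W$$(i,j) * x$j) - (if i \<notin> E then s i else 0)" if i: "i<n" for i
      proof -
        have "(\<Sum>j\<in>{0..<n}. W'$$(i,j) * x$j) = (\<Sum>j\<in>{0..<n}. W$$(i,j) * x$j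
             - (if i \<notin> E then (if j\<in>E then W$$(i,j)*x$j else 0) else 0))"
          by (rule sum.cong) (auto simp: W'e[OF i])
        also have "\<dots> = (\<Sum>j\<in>{0..<n}. W$$(i,j) * x$j) - (if i \<notin> E then s i else 0)"
          by (simp add: sum_subtractf s_def)
        finally show ?thesis .
      qed
      have fpW: "\<forall>i<n. x$i = max 0 ((\<Sum>j\<in>{0..<n}. W$$(i,j) * x$j) + b$i)"
        using fp fp_iff[OF WC x b] by blast
      have b'C: "b' \<in> carrier_vec n" by (simp add: b'_def)
      have "is_fixed_point W' b' x"
        unfolding fp_iff[OF W'C x b'C]
      proof (intro allI impI)
        fix i assume i: "i<n"
        have A: "(\<Sum>j\<in>{0..<n}. W'$$(i,j) * x$j) + b'$i = (\<Sum>j\<in>{0..<n}. W$$(i,j) * x$j) + b$i"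
          using sumW'[OF i] i by (simp add: b'_def)
        show "x$i = max 0 ((\<Sum>j\<in>{0..<n}. W'$$(i,j) * x$j) + b'$i)"
          by (subst A) (rule fpW[rule_format, OF i])
      qed
      moreover have "\<forall>i<n. b' $ i \<ge> 0" using bn sn by (simp add: b'_def add_nonneg_nonneg)
      moreover have "b' \<in> carrier_vec n" by (simp add: b'_def)
      ultimately show "S \<in> comb_code n E W'" unfolding comb_code_def using S x xn by blast
    qed
  next
    show "comb_code n E W' \<subseteq> comb_code n E W"
    proof
      fix S assume "S \<in> comb_code n E W'"
      then obtain b' x where S: "S = supp_plus E x" and b': "b' \<in> carrier_vec n" and x: "x \<in> carrier_vec n"
        and bn: "\<forall>i<n. b' $ i \<ge> 0" and xn: "\<forall>i<n. x $ i \<ge> 0" and fp: "is_fixed_point W' b' x"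
        unfolding comb_code_def by blast
      define s where "s i = (\<Sum>j\<in>{0..<n}. if j\<in>E then W$$(i,j)*x$j else 0)" for i
      define d where "d i = (if i\<in>E then 0 else s i)" for i
      define y where "y = vec n (\<lambda>i. x$i + d i)"
      define b where "b = vec n (\<lambda>i. if i\<in>E then b'$i - (\<Sum>j\<in>{0..<n}. W$$(i,j)*d j)
                         else x$i - (\<Sum>j\<in>{0..<n}. if j\<notin>E then W$$(i,j)*y$j else 0))"
      have sn: "s i \<ge> 0" if "i<n" for i
        unfolding s_def using pos[OF that] xn by (intro sum_nonneg) auto
      have dn: "d i \<ge> 0" if "i<n" for i using sn[OF that] by (simp add: d_def)
      have yC: "y \<in> carrier_vec n" and bC: "b \<in> carrier_vec n" by (simp_all add: y_def b_def)
      have yi: "y$i = x$i + d i" if "i<n" for i using that by (simp add: y_def)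
      have yn: "\<forall>i<n. y $ i \<ge> 0" using xn dn yi by (simp add: add_nonneg_nonneg)
      have fpW': "\<forall>i<n. x$i = max 0 ((\<Sum>j\<in>{0..<n}. W'$$(i,j) * x$j) + b'$i)"
        using fp fp_iff[OF W'C x b'] by blast
      have bn2: "\<forall>i<n. b $ i \<ge> 0"
      proof (intro allI impI)
        fix i assume i: "i<n"
        show "b$i \<ge> 0"
        proof (cases "i\<in>E")
          case True
          have "(\<Sum>j\<in>{0..<n}. W$$(i,j)*d j) \<le> 0"
            by (rule sum_nonpos) (auto simp: d_def mult_nonpos_nonneg neg[OF i] sn)
          then show ?thesis using True i bn[rule_format, OF i] by (simp add: b_def)
        next
          case False
          have "(\<Sum>j\<in>{0..<n}. if j\<notin>E then W$$(i,j)*y$j else 0) \<le> 0"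
            by (rule sum_nonpos) (auto simp: mult_nonpos_nonneg neg[OF i] yn)
          then show ?thesis using False i xn[rule_format, OF i] by (simp add: b_def)
        qed
      qed
      have "is_fixed_point W b y"
        unfolding fp_iff[OF WC yC bC]
      proof (intro allI impI)
        fix i assume i: "i<n"
        show "y$i = max 0 ((\<Sum>j\<in>{0..<n}. W$$(i,j) * y$j) + b$i)"
        proof (cases "i\<in>E")
          case True
          have "(\<Sum>j\<in>{0..<n}. W$$(i,j) * y$j) = (\<Sum>j\<in>{0..<n}. W$$(i,j) * x$j + W$$(i,j)*d j)"
            by (rule sum.cong) (auto simp: yi algebra_simps)
          also have "\<dots> = (\<Sum>j\<in>{0..<n}. W'$$(i,j) * x$j) + (\<Sum>j\<in>{0..<n}. W$$(i,j)*d j)"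
            using True by (simp add: sum.distrib W'e[OF i])
          finally have C: "(\<Sum>j\<in>{0..<n}. W$$(i,j) * y$j) = (\<Sum>j\<in>{0..<n}. W'$$(i,j) * x$j) + (\<Sum>j\<in>{0..<n}. W$$(i,j)*d j)" .
          have A: "(\<Sum>j\<in>{0..<n}. W$$(i,j) * y$j) + b$i = (\<Sum>j\<in>{0..<n}. W'$$(i,j) * x$j) + b'$i"
            using True i C by (simp add: b_def)
          have B: "y$i = x$i" using yi[OF i] True by (simp add: d_def)
          show ?thesis by (subst A, subst B) (rule fpW'[rule_format, OF i])
        next
          case False
          have "(\<Sum>j\<in>{0..<n}. W$$(i,j) * y$j) = (\<Sum>j\<in>{0..<n}.
               (if j\<in>E then W$$(i,j)*x$j else 0) + (if j\<notin>E then W$$(i,j)*y$j else 0))"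
            by (rule sum.cong) (auto simp: yi d_def)
          also have "\<dots> = s i + (\<Sum>j\<in>{0..<n}. if j\<notin>E then W$$(i,j)*y$j else 0)"
            by (simp add: sum.distrib s_def)
          finally show ?thesis using False i yi[OF i] yn[rule_format, OF i]
            by (simp add: b_def d_def)
        qed
      qed
      moreover have "supp_plus E y = supp_plus E x"
      proof -
        have "y$i = x$i" if "i \<in> E" "i<n" for i using yi[OF that(2)] that(1) by (simp add: d_def)
        moreover have "E \<subseteq> {..<n}" using D by blast
        ultimately show ?thesis using x yC unfolding supp_plus_def by auto
      qed
      ultimately show "S \<in> comb_code n E W" unfolding comb_code_def
        using S yC yn bC bn2 by blast
    qed
  qed
qed

end
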